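(* Let $G$ be an uncountable Polish group. The following are equivalent: (1) every countable subset of $G$ is contained in a $G_\delta$ Haar null subset of $G$; (2) there exists a countable dense subset of $G$ that is contained in a $G_\delta$ Haar null subset of $G$; (3) $G$ can be written as the union of a meager set and a Haar null set.
   Context: A Polish group is a topological group whose topology is separable and completely metrizable. A set $A\subseteq G$ is Haar null if there are a Borel set $B\supseteq A$ and a Borel probability measure $\mu$ on $G$ with $\mu(gBh)=0$ for all $g,h\in G$. *)

theory Defs
  imports "HOL-Probability.Probability"
begin

text \<open>A Polish group is modelled as a type of class topological_group_add (a possibly
non-commutative group, written additively, with continuous operations) that is also a
polish_space (separable, with a compatible complete metric).\<close>

definition haar_null :: "'a::{topological_group_add, polish_space} set \<Rightarrow> bool" where
  "haar_null A \<longleftrightarrow>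
     (\<exists>B \<mu>. B \<in> sets borel \<and> A \<subseteq> B \<and> prob_space \<mu> \<and> sets \<mu> = sets (borel :: 'a measure) \<and>
        (\<forall>g h. measure \<mu> ((\<lambda>b. g + b + h) ` B) = 0))"

definition nowhere_dense :: "'a::topological_space set \<Rightarrow> bool" where
  "nowhere_dense A \<longleftrightarrow> interior (closure A) = {}"

definition meager :: "'a::topological_space set \<Rightarrow> bool" where
  "meager A \<longleftrightarrow> (\<exists>F. countable F \<and> (\<forall>N\<in>F. nowhere_dense N) \<and> A \<subseteq> \<Union>F)"

end

theory Submission
  imports Defs
begin

lemma mem_ne_emptyI: "x \<in> A \<Longrightarrow> A \<noteq> {}" by auto

definition dG :: "'a::topological_space set \<Rightarrow> bool" where
  "dG K \<longleftrightarrow> (\<exists>T. countable T \<and> (\<forall>U\<in>T. open U \<and> closure U = UNIV) \<and> K = \<Inter>T)"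

lemma dense_iff: "closure (U::'a::topological_space set) = UNIV \<longleftrightarrow> (\<forall>V. open V \<longrightarrow> V \<noteq> {} \<longrightarrow> V \<inter> U \<noteq> {})"
proof
  assume "closure U = UNIV"
  then show "\<forall>V. open V \<longrightarrow> V \<noteq> {} \<longrightarrow> V \<inter> U \<noteq> {}"
    using open_Int_closure_eq_empty by (metis inf_top.right_neutral)
next
  assume a: "\<forall>V. open V \<longrightarrow> V \<noteq> {} \<longrightarrow> V \<inter> U \<noteq> {}"
  show "closure U = UNIV"
  proof (rule ccontr)
    assume "closure U \<noteq> UNIV"
    then have n: "- closure U \<noteq> {}" by auto
    have o: "open (- closure U)" by auto
    have e: "(- closure U) \<inter> U = {}" using closure_subset by auto
    have "(- closure U) \<inter> U \<noteq> {}" using a[rule_format, OF o n] .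
    then show False using e by simp
  qed
qed

lemma dG_gdelta: "dG K \<Longrightarrow> gdelta_in euclidean K"
  unfolding dG_def
proof (elim exE conjE)
  fix T assume T: "countable T" "\<forall>U\<in>T. open U \<and> closure U = UNIV" "K = \<Inter>T"
  show "gdelta_in euclidean K"
  proof (cases "T = {}")
    case True then show ?thesis using T gdelta_in_topspace[of euclidean] by simp
  next
    case False
    have "gdelta_in euclidean (\<Inter>T)"
      by (rule gdelta_in_Inter) (use T False in \<open>auto intro: open_imp_gdelta_in\<close>)
    then show ?thesis using T by simp
  qed
qed

lemma dG_dense:
  fixes K :: "'a::polish_space set"
  assumes "dG K" shows "closure K = UNIV"
proof -
  obtain T where T: "countable T" "\<forall>U\<in>T. open U \<and> closure U = UNIV" "K = \<Inter>T"
    using assms unfolding dG_def by blast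
  have "euclidean closure_of \<Inter>T = topspace (euclidean::'a topology)"
    by (rule Baire_category) (use T completely_metrizable_space_euclidean in auto)
  then show ?thesis using T by simp
qed

lemma dG_Inter:
  assumes "countable S" "\<And>K. K \<in> S \<Longrightarrow> dG K"
  shows "dG (\<Inter>S)"
proof -
  have "\<forall>K\<in>S. \<exists>T. countable T \<and> (\<forall>U\<in>T. open U \<and> closure U = UNIV) \<and> K = \<Inter>T"
    using assms(2) unfolding dG_def by blast
  then obtain f where f: "\<And>K. K \<in> S \<Longrightarrow> countable (f K) \<and> (\<forall>U\<in>f K. open U \<and> closure U = UNIV) \<and> K = \<Inter>(f K)"
    by metis
  have f1: "countable (f K)" if "K \<in> S" for K using f[OF that] by (rule conjunct1)
  have f2: "\<forall>U\<in>f K. open U \<and> closure U = UNIV" if "K \<in> S" for K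
    using f[OF that] by (rule conjunct2[THEN conjunct1])
  have f3: "K = \<Inter>(f K)" if "K \<in> S" for K
    using f[OF that] by (rule conjunct2[THEN conjunct2])
  have c1: "countable (\<Union>K\<in>S. f K)" by (rule countable_UN[OF assms(1) f1])
  have c2: "\<forall>U\<in>(\<Union>K\<in>S. f K). open U \<and> closure U = UNIV"
  proof
    fix U assume "U \<in> (\<Union>K\<in>S. f K)"
    then obtain K where K: "K \<in> S" "U \<in> f K" by (rule UN_E)
    show "open U \<and> closure U = UNIV" using f2[OF K(1)] K(2) by (rule bspec)
  qed
  have mem: "x \<in> K \<longleftrightarrow> x \<in> \<Inter>(f K)" if "K \<in> S" for K x
    using f3[OF that] by (rule arg_cong)
  have c3: "\<Inter>S = \<Inter>(\<Union>K\<in>S. f K)"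
  proof (rule set_eqI)
    fix x
    have "x \<in> \<Inter>S \<longleftrightarrow> (\<forall>K\<in>S. x \<in> K)" by simp
    also have "\<dots> \<longleftrightarrow> (\<forall>K\<in>S. x \<in> \<Inter>(f K))" using mem by simp
    also have "\<dots> \<longleftrightarrow> x \<in> \<Inter>(\<Union>K\<in>S. f K)" by simp
    finally show "x \<in> \<Inter>S \<longleftrightarrow> x \<in> \<Inter>(\<Union>K\<in>S. f K)" .
  qed
  show ?thesis unfolding dG_def by (rule exI[of _ "\<Union>K\<in>S. f K"], intro conjI, fact c1, fact c2, fact c3)
qed

lemma dG_preimage:
  fixes f f' :: "'a::topological_space \<Rightarrow> 'a"
  assumes "continuous_on UNIV f" "continuous_on UNIV f'"
    "\<And>x. f' (f x) = x" "\<And>y. f (f' y) = y" "dG K"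
  shows "dG (f -` K)"
proof -
  obtain T where T: "countable T" "\<forall>U\<in>T. open U \<and> closure U = UNIV" "K = \<Inter>T"
    using assms unfolding dG_def by blast
  have "\<forall>U\<in>(\<lambda>U. f -` U) ` T. open U \<and> closure U = UNIV"
  proof
    fix W assume "W \<in> (\<lambda>U. f -` U) ` T"
    then obtain U where U: "U \<in> T" "W = f -` U" by blast
    have "open W" using U T assms(1) open_vimage by blast
    moreover have "closure W = UNIV" unfolding dense_iff
    proof (intro allI impI)
      fix V :: "'a set" assume V: "open V" "V \<noteq> {}"
      have oV: "open (f' -` V)" using V assms(2) open_vimage by blast
      have "\<exists>v. v \<in> V" using V(2) by (simp only: ex_in_conv not_False_eq_True)
      then obtain v where v: "v \<in> V" ..
      have "f v \<in> f' -` V" using v assms(3) by simp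
      then have nV: "f' -` V \<noteq> {}" by (rule mem_ne_emptyI)
      have cU: "closure U = UNIV" using U T by blast
      have dU: "\<forall>V. open V \<longrightarrow> V \<noteq> {} \<longrightarrow> V \<inter> U \<noteq> {}"
        using cU unfolding dense_iff .
      have "f' -` V \<inter> U \<noteq> {}" using dU[rule_format, OF oV nV] .
      then have "\<exists>y. y \<in> f' -` V \<inter> U" by (simp only: ex_in_conv not_False_eq_True)
      then obtain y where y: "y \<in> f' -` V \<inter> U" ..
      then have "f' y \<in> V \<inter> W" using U assms(4) by simp
      then show "V \<inter> W \<noteq> {}" by (rule mem_ne_emptyI)
    qed
    ultimately show "open W \<and> closure W = UNIV" by (rule conjI)
  qed
  then have c2: "\<forall>U\<in>(\<lambda>U. f -` U) ` T. open U \<and> closure U = UNIV" .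
  have c3: "f -` K = \<Inter>((\<lambda>U. f -` U) ` T)" using T by auto
  have c1: "countable ((\<lambda>U. f -` U) ` T)" using T(1) by blast
  show ?thesis unfolding dG_def by (rule exI[of _ "(\<lambda>U. f -` U) ` T"], intro conjI, fact c1, fact c2, fact c3)
qed

lemma gdelta_dense_dG:
  assumes "gdelta_in euclidean H" "D \<subseteq> H" "closure D = UNIV"
  shows "dG H"
proof -
  obtain T where T: "countable T" "T \<subseteq> Collect (openin euclidean)" "\<Inter>T = H"
    using assms(1) unfolding gdelta_in_alt intersection_of_def by blast
  have c2: "\<forall>U\<in>T. open U \<and> closure U = UNIV"
  proof
    fix U assume "U \<in> T"
    then have "open U" "D \<subseteq> U" using T assms(2) by auto
    moreover have "closure D \<subseteq> closure U" using \<open>D \<subseteq> U\<close> closure_mono by blast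
    ultimately show "open U \<and> closure U = UNIV" using assms(3) by auto
  qed
  have c3: "H = \<Inter>T" using T(3) by simp
  show ?thesis unfolding dG_def by (rule exI[of _ T], intro conjI, fact T(1), fact c2, fact c3)
qed

lemma dense_countable_subset:
  fixes K :: "'a::second_countable_topology set"
  assumes "closure K = UNIV"
  shows "\<exists>D. countable D \<and> D \<subseteq> K \<and> closure D = UNIV"
proof -
  obtain \<B> :: "'a set set" where B: "countable \<B>" "\<And>C. C \<in> \<B> \<Longrightarrow> open C"
       "\<And>S. open S \<Longrightarrow> \<exists>U. U \<subseteq> \<B> \<and> S = \<Union>U"
    by (rule univ_second_countable) blast
  define D where "D = (\<lambda>U. SOME x. x \<in> U \<inter> K) ` {U\<in>\<B>. U \<noteq> {}}"
  have pick: "(SOME x. x \<in> U \<inter> K) \<in> U \<inter> K" if "U \<in> \<B>" "U \<noteq> {}" for U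
  proof -
    have dK: "\<forall>V. open V \<longrightarrow> V \<noteq> {} \<longrightarrow> V \<inter> K \<noteq> {}"
      using assms unfolding dense_iff .
    have "open U" using B(2) that(1) .
    have "U \<inter> K \<noteq> {}" using dK[rule_format, OF \<open>open U\<close> that(2)] .
    then show ?thesis using some_in_eq[of "U \<inter> K"] by (simp only: not_False_eq_True)
  qed
  have c1: "countable D" unfolding D_def using B(1) by auto
  have c2: "D \<subseteq> K"
  proof
    fix z assume "z \<in> D"
    then obtain U where U: "U \<in> {U\<in>\<B>. U \<noteq> {}}" "z = (SOME x. x \<in> U \<inter> K)"
      unfolding D_def by (rule imageE)
    have "U \<in> \<B>" "U \<noteq> {}" using U(1) by simp_all
    then have "(SOME x. x \<in> U \<inter> K) \<in> U \<inter> K" by (rule pick)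
    then show "z \<in> K" using U(2) by simp
  qed
  have c3: "closure D = UNIV" unfolding dense_iff
  proof (intro allI impI)
    fix V :: "'a set" assume V: "open V" "V \<noteq> {}"
    obtain U where U: "U \<subseteq> \<B>" "V = \<Union>U" using B(3)[OF V(1)] by blast
    have "\<exists>v. v \<in> V" using V(2) by (simp only: ex_in_conv not_False_eq_True)
    then obtain v where v: "v \<in> V" ..
    then obtain W where W: "W \<in> U" "v \<in> W" using U(2) by blast
    have WB: "W \<in> \<B>" using W(1) U(1) by blast
    have Wn: "W \<noteq> {}" using W(2) by (rule mem_ne_emptyI)
    have p: "(SOME x. x \<in> W \<inter> K) \<in> W \<inter> K" using WB Wn by (rule pick)
    have "(SOME x. x \<in> W \<inter> K) \<in> V" using p W(1) U(2) by blast
    moreover have "(SOME x. x \<in> W \<inter> K) \<in> D" unfolding D_def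
      by (rule image_eqI[where x=W]) (simp_all add: WB Wn)
    ultimately have "(SOME x. x \<in> W \<inter> K) \<in> V \<inter> D" by (rule IntI)
    then show "V \<inter> D \<noteq> {}" by (rule mem_ne_emptyI)
  qed
  show ?thesis by (rule exI[of _ D], intro conjI, fact c1, fact c2, fact c3)
qed

lemma haar_null_I:
  fixes A :: "'a::{topological_group_add, polish_space} set"
  assumes "C \<in> sets borel" "A \<subseteq> C" "prob_space \<mu>" "sets \<mu> = sets (borel :: 'a measure)"
    "\<And>g h. measure \<mu> ((\<lambda>b. g + b + h) ` C) = 0"
  shows "haar_null A"
proof -
  have "\<forall>g h. measure \<mu> ((\<lambda>b. g + b + h) ` C) = 0" using assms(5) by (intro allI)
  then have "C \<in> sets borel \<and> A \<subseteq> C \<and> prob_space \<mu> \<and> sets \<mu> = sets (borel :: 'a measure) \<and>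
        (\<forall>g h. measure \<mu> ((\<lambda>b. g + b + h) ` C) = 0)"
    using assms(1-4) by (intro conjI)
  then have "\<exists>\<mu>. C \<in> sets borel \<and> A \<subseteq> C \<and> prob_space \<mu> \<and> sets \<mu> = sets (borel :: 'a measure) \<and>
        (\<forall>g h. measure \<mu> ((\<lambda>b. g + b + h) ` C) = 0)" by (rule exI)
  then have "\<exists>C \<mu>. C \<in> sets borel \<and> A \<subseteq> C \<and> prob_space \<mu> \<and> sets \<mu> = sets (borel :: 'a measure) \<and>
        (\<forall>g h. measure \<mu> ((\<lambda>b. g + b + h) ` C) = 0)" by (rule exI)
  then show ?thesis unfolding haar_null_def .
qed

lemma haar_null_E:
  fixes A :: "'a::{topological_group_add, polish_space} set"
  assumes "haar_null A"
  obtains C \<mu> where "C \<in> sets borel" "A \<subseteq> C" "prob_space \<mu>" "sets \<mu> = sets (borel :: 'a measure)"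
    "\<And>g h. measure \<mu> ((\<lambda>b. g + b + h) ` C) = 0"
proof -
  have "\<exists>C \<mu>. C \<in> sets borel \<and> A \<subseteq> C \<and> prob_space \<mu> \<and> sets \<mu> = sets (borel :: 'a measure) \<and>
        (\<forall>g h. measure \<mu> ((\<lambda>b. g + b + h) ` C) = 0)" using assms unfolding haar_null_def .
  then obtain C where "\<exists>\<mu>. C \<in> sets borel \<and> A \<subseteq> C \<and> prob_space \<mu> \<and> sets \<mu> = sets (borel :: 'a measure) \<and>
        (\<forall>g h. measure \<mu> ((\<lambda>b. g + b + h) ` C) = 0)" ..
  then obtain \<mu> where h: "C \<in> sets borel \<and> A \<subseteq> C \<and> prob_space \<mu> \<and> sets \<mu> = sets (borel :: 'a measure) \<and>
        (\<forall>g h. measure \<mu> ((\<lambda>b. g + b + h) ` C) = 0)" ..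
  from h have h1: "C \<in> sets borel" by (rule conjunct1)
  from h have h2: "A \<subseteq> C" by (rule conjunct2[THEN conjunct1])
  from h have h3: "prob_space \<mu>" by (rule conjunct2[THEN conjunct2, THEN conjunct1])
  from h have h4: "sets \<mu> = sets (borel :: 'a measure)" by (rule conjunct2[THEN conjunct2, THEN conjunct2, THEN conjunct1])
  from h have h5: "\<forall>g h. measure \<mu> ((\<lambda>b. g + b + h) ` C) = 0" by (rule conjunct2[THEN conjunct2, THEN conjunct2, THEN conjunct2])
  show thesis by (rule that[OF h1 h2 h3 h4]) (rule h5[rule_format])
qed

lemma haar_null_mono:
  fixes A :: "'a::{topological_group_add, polish_space} set"
  assumes "haar_null B" "A \<subseteq> B" shows "haar_null A"
proof (rule haar_null_E[OF assms(1)])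
  fix C \<mu> assume C: "C \<in> sets borel" "B \<subseteq> C" "prob_space \<mu>" "sets \<mu> = sets (borel :: 'a measure)"
    "\<And>g h. measure \<mu> ((\<lambda>b. g + b + h) ` C) = 0"
  have "A \<subseteq> C" using assms(2) C(2) by (rule subset_trans)
  show ?thesis by (rule haar_null_I[OF C(1) \<open>A \<subseteq> C\<close> C(3) C(4) C(5)])
qed

lemma haar_null_translate:
  fixes H :: "'a::{topological_group_add, polish_space} set"
  assumes "haar_null H"
  shows "haar_null ((\<lambda>x. g + x) ` H)"
proof (rule haar_null_E[OF assms])
  fix B \<mu> assume Bm: "B \<in> sets borel" "H \<subseteq> B" "prob_space \<mu>" "sets \<mu> = sets (borel :: 'a measure)"
        "\<And>g h. measure \<mu> ((\<lambda>b. g + b + h) ` B) = 0"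
  have eq: "(\<lambda>x. g + x) ` B = (\<lambda>x. -g + x) -` B"
  proof
    show "(\<lambda>x. g + x) ` B \<subseteq> (\<lambda>x. -g + x) -` B" by (auto simp: add.assoc[symmetric])
    show "(\<lambda>x. -g + x) -` B \<subseteq> (\<lambda>x. g + x) ` B"
    proof
      fix x assume "x \<in> (\<lambda>x. -g + x) -` B"
      then have "-g + x \<in> B" by simp
      moreover have "x = g + (-g + x)" by (simp add: add.assoc[symmetric])
      ultimately show "x \<in> (\<lambda>x. g + x) ` B" by blast
    qed
  qed
  have "(\<lambda>x. -g + x) \<in> borel_measurable borel"
    by (intro borel_measurable_continuous_onI continuous_intros)
  then have "(\<lambda>x. -g + x) -` B \<inter> space borel \<in> sets borel"
    using Bm(1) measurable_sets by blast
  then have Bs: "(\<lambda>x. g + x) ` B \<in> sets borel" using eq by simp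
  have m0: "measure \<mu> ((\<lambda>b. g' + b + h) ` ((\<lambda>x. g + x) ` B)) = 0" for g' h
  proof -
    have "(\<lambda>b. g' + b + h) ` ((\<lambda>x. g + x) ` B) = (\<lambda>b. (g' + g) + b + h) ` B"
      by (simp add: image_image add.assoc)
    then show "measure \<mu> ((\<lambda>b. g' + b + h) ` ((\<lambda>x. g + x) ` B)) = 0" using Bm(5) by simp
  qed
  have "H \<subseteq> B" by (rule Bm(2))
  then have "(\<lambda>x. g + x) ` H \<subseteq> (\<lambda>x. g + x) ` B" by (rule image_mono)
  then show ?thesis by (rule haar_null_I[OF Bs _ Bm(3) Bm(4) m0])
qed

lemma dir12:
  assumes a: "\<forall>C::'a::{topological_group_add, polish_space} set. countable C \<longrightarrow> (\<exists>H. C \<subseteq> H \<and> gdelta_in euclidean H \<and> haar_null H)"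
  shows "\<exists>D::'a::{topological_group_add, polish_space} set. countable D \<and> closure D = UNIV \<and> (\<exists>H. D \<subseteq> H \<and> gdelta_in euclidean H \<and> haar_null H)"
proof -
  have "\<exists>D::'a set. countable D \<and> D \<subseteq> UNIV \<and> closure D = UNIV"
    by (rule dense_countable_subset) simp
  then obtain D :: "'a set" where D: "countable D" "closure D = UNIV"
    by blast
  obtain H :: "'a set" where H: "D \<subseteq> H" "gdelta_in euclidean H" "haar_null H"
    using a[rule_format, OF D(1)] by blast
  show "\<exists>D::'a set. countable D \<and> closure D = UNIV \<and>
             (\<exists>H. D \<subseteq> H \<and> gdelta_in euclidean H \<and> haar_null H)"
    by (rule exI[of _ D], intro conjI, fact D(1), fact D(2), rule exI[of _ H], intro conjI, fact H(1), fact H(2), fact H(3))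
qed

lemma dir21:
  assumes "\<exists>D::'a::{topological_group_add, polish_space} set. countable D \<and> closure D = UNIV \<and> (\<exists>H. D \<subseteq> H \<and> gdelta_in euclidean H \<and> haar_null H)"
  shows "\<forall>C::'a::{topological_group_add, polish_space} set. countable C \<longrightarrow> (\<exists>H. C \<subseteq> H \<and> gdelta_in euclidean H \<and> haar_null H)"
proof -
  from assms obtain D H :: "'a set" where DH: "countable D" "closure D = UNIV" "D \<subseteq> H" "gdelta_in euclidean H" "haar_null H"
    by blast
  have dH: "dG H" by (rule gdelta_dense_dG[OF DH(4) DH(3) DH(2)])
  show "\<forall>C::'a set. countable C \<longrightarrow> (\<exists>H. C \<subseteq> H \<and> gdelta_in euclidean H \<and> haar_null H)"
  proof (intro allI impI)
    fix C :: "'a set" assume C: "countable C"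
    have pre: "dG ((\<lambda>x. a + x) -` H)" for a
    proof (rule dG_preimage[where f'="\<lambda>x. -a + x"])
      show "continuous_on UNIV (\<lambda>x::'a. a + x)" by (intro continuous_intros)
      show "continuous_on UNIV (\<lambda>x::'a. -a + x)" by (intro continuous_intros)
      show "-a + (a + x) = x" for x :: 'a by (simp add: add.assoc[symmetric])
      show "a + (-a + x) = x" for x :: 'a by (simp add: add.assoc[symmetric])
      show "dG H" by (rule dH)
    qed
    have pre2: "dG ((\<lambda>g. -g + c) -` H)" for c
    proof (rule dG_preimage[where f'="\<lambda>y. c + -y"])
      show "continuous_on UNIV (\<lambda>x::'a. -x + c)" by (intro continuous_intros)
      show "continuous_on UNIV (\<lambda>y::'a. c + -y)" by (intro continuous_intros)
      show "c + - (-x + c) = x" for x :: 'a by (simp add: minus_add add.assoc[symmetric])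
      show "- (c + - y) + c = y" for y :: 'a by (simp add: minus_add add.assoc)
      show "dG H" by (rule dH)
    qed
    define X where "X = (\<Inter>c\<in>C. (\<lambda>g. -g + c) -` H)"
    have "dG X" unfolding X_def
      using C pre2 by (intro dG_Inter) auto
    then have cX: "closure X = UNIV" by (rule dG_dense)
    have "X \<noteq> {}"
    proof
      assume "X = {}"
      then show False using cX by simp
    qed
    then have "\<exists>g. g \<in> X" by (simp only: ex_in_conv not_False_eq_True)
    then obtain g where g: "g \<in> X" ..
    have eq: "(\<lambda>x. g + x) ` H = (\<lambda>x. -g + x) -` H"
    proof
      show "(\<lambda>x. g + x) ` H \<subseteq> (\<lambda>x. -g + x) -` H" by (auto simp: add.assoc[symmetric])
      show "(\<lambda>x. -g + x) -` H \<subseteq> (\<lambda>x. g + x) ` H"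
      proof
        fix x assume "x \<in> (\<lambda>x. -g + x) -` H"
        then have "-g + x \<in> H" by simp
        moreover have "x = g + (-g + x)" by (simp add: add.assoc[symmetric])
        ultimately show "x \<in> (\<lambda>x. g + x) ` H" by blast
      qed
    qed
    have c1: "C \<subseteq> (\<lambda>x. g + x) ` H"
    proof
      fix c assume "c \<in> C"
      then have "-g + c \<in> H" using g unfolding X_def by blast
      moreover have "c = g + (-g + c)" by (simp add: add.assoc[symmetric])
      ultimately show "c \<in> (\<lambda>x. g + x) ` H" by blast
    qed
    have c2: "gdelta_in euclidean ((\<lambda>x. g + x) ` H)"
      unfolding eq using pre[of "-g"] dG_gdelta by blast
    have c3: "haar_null ((\<lambda>x. g + x) ` H)" by (rule haar_null_translate[OF DH(5)])
    show "\<exists>H. C \<subseteq> H \<and> gdelta_in euclidean H \<and> haar_null H"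
      by (rule exI[of _ "(\<lambda>x. g + x) ` H"], intro conjI, fact c1, fact c2, fact c3)
  qed
qed

lemma dir23:
  assumes "\<exists>D::'a::{topological_group_add, polish_space} set. countable D \<and> closure D = UNIV \<and> (\<exists>H. D \<subseteq> H \<and> gdelta_in euclidean H \<and> haar_null H)"
  shows "\<exists>M N::'a::{topological_group_add, polish_space} set. meager M \<and> haar_null N \<and> M \<union> N = UNIV"
proof -
  from assms obtain D H :: "'a set" where DH: "countable D" "closure D = UNIV" "D \<subseteq> H" "gdelta_in euclidean H" "haar_null H"
    by blast
  have "dG H" by (rule gdelta_dense_dG[OF DH(4) DH(3) DH(2)])
  then obtain T where T: "countable T" "\<forall>U\<in>T. open U \<and> closure U = UNIV" "H = \<Inter>T"
    unfolding dG_def by blast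
  have mH: "meager (- H)" unfolding meager_def
  proof (intro exI conjI)
    show "countable (uminus ` T)" using T by blast
    show "\<forall>N\<in>uminus ` T. nowhere_dense N"
    proof
      fix N assume "N \<in> uminus ` T"
      then obtain U where U: "U \<in> T" "N = -U" by blast
      have oU: "open U" and cU: "closure U = UNIV" using U(1) T(2) by auto
      have "closed N" unfolding U(2) by (rule closed_Compl[OF oU])
      then have "closure N = N" by (rule closure_closed)
      then have "interior (closure N) = interior (- U)" using U(2) by simp
      also have "\<dots> = - closure U" by (rule interior_complement)
      also have "\<dots> = {}" using cU by simp
      finally show "nowhere_dense N" unfolding nowhere_dense_def .
    qed
    show "- H \<subseteq> \<Union>(uminus ` T)" using T by auto
  qed
  have uH: "- H \<union> H = UNIV" by auto
  show "\<exists>M N::'a set. meager M \<and> haar_null N \<and> M \<union> N = UNIV"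
    by (rule exI[of _ "-H"], rule exI[of _ H], intro conjI, fact mH, fact DH(5), fact uH)
qed

lemma dir32:
  assumes "\<exists>M N::'a::{topological_group_add, polish_space} set. meager M \<and> haar_null N \<and> M \<union> N = UNIV"
  shows "\<exists>D::'a::{topological_group_add, polish_space} set. countable D \<and> closure D = UNIV \<and> (\<exists>H. D \<subseteq> H \<and> gdelta_in euclidean H \<and> haar_null H)"
proof -
  from assms obtain M N :: "'a set" where MN: "meager M" "haar_null N" "M \<union> N = UNIV" by blast
  obtain F where F: "countable F" "\<forall>N\<in>F. nowhere_dense N" "M \<subseteq> \<Union>F"
    using MN(1) unfolding meager_def by blast
  define K where "K = \<Inter>((\<lambda>N. - closure N) ` F)"
  have "dG K" unfolding dG_def K_def
  proof (intro exI conjI)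
    show "countable ((\<lambda>N. - closure N) ` F)" using F by blast
    show "\<forall>U\<in>(\<lambda>N. - closure N) ` F. open U \<and> closure U = UNIV"
      using F by (auto simp: nowhere_dense_def closure_complement)
  qed simp
  have "K \<subseteq> N"
  proof
    fix x assume "x \<in> K"
    then have "\<forall>N'\<in>F. x \<notin> closure N'" unfolding K_def by blast
    then have "\<forall>N'\<in>F. x \<notin> N'" using closure_subset by blast
    then have "x \<notin> M" using F(3) by blast
    then show "x \<in> N" using MN(3) by blast
  qed
  then have hK: "haar_null K" by (rule haar_null_mono[OF MN(2)])
  obtain D :: "'a set" where D: "countable D" "D \<subseteq> K" "closure D = UNIV"
    using dense_countable_subset[OF dG_dense[OF \<open>dG K\<close>]] by blast
  have gK: "gdelta_in euclidean K" by (rule dG_gdelta[OF \<open>dG K\<close>])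
  show "\<exists>D::'a set. countable D \<and> closure D = UNIV \<and>
             (\<exists>H. D \<subseteq> H \<and> gdelta_in euclidean H \<and> haar_null H)"
    by (rule exI[of _ D], intro conjI, fact D(1), fact D(3), rule exI[of _ K], intro conjI, fact D(2), fact gK, fact hK)
qed

theorem theorem5p34:
  assumes "uncountable (UNIV :: 'a::{topological_group_add, polish_space} set)"
  shows "((\<forall>C::'a set. countable C \<longrightarrow>
             (\<exists>H. C \<subseteq> H \<and> gdelta_in euclidean H \<and> haar_null H))
        \<longleftrightarrow> (\<exists>D::'a set. countable D \<and> closure D = UNIV \<and>
             (\<exists>H. D \<subseteq> H \<and> gdelta_in euclidean H \<and> haar_null H)))
       \<and> ((\<exists>D::'a set. countable D \<and> closure D = UNIV \<and>
             (\<exists>H. D \<subseteq> H \<and> gdelta_in euclidean H \<and> haar_null H))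
        \<longleftrightarrow> (\<exists>M N::'a set. meager M \<and> haar_null N \<and> M \<union> N = UNIV))"
  by (intro conjI iffI) (erule dir12, erule dir21, erule dir23, erule dir32)

end
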